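(* Let $\|\cdot\|$ be a URTC-norm on $\mathbb{R}^2$ with unit sphere $S$. Define $f\colon S\to S$ by letting $f(z)$ be the unique point of $S$ such that $\|z-f(z)\|=1$ and the triangle $(0,z,f(z))$ is positively oriented. Then $f$ is continuous.
   Context: A norm $\|\cdot\|$ on $\mathbb{R}^2$ is called a URTC-norm if for every $a,b\in\mathbb{R}^2$ with $\|a-b\|=1$ the system $\|a-x\|=1$, $\|b-x\|=1$ is satisfied by exactly two points $x\in\mathbb{R}^2$ (for $a=0$, $b=z\in S$ these two points lie on opposite sides of the line through $0$ and $z$, so $f$ is well defined). $S=\{x:\|x\|=1\}$. A triangle $(p,q,r)$ is positively oriented if its vertices are in counterclockwise order. *)

theory Defs
  imports "HOL-Analysis.Analysis"
begin

definition is_norm2 :: "(real \<times> real \<Rightarrow> real) \<Rightarrow> bool" where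
  "is_norm2 N \<longleftrightarrow>
     (\<forall>x. N x = 0 \<longleftrightarrow> x = 0) \<and>
     (\<forall>c x. N (c *\<^sub>R x) = \<bar>c\<bar> * N x) \<and>
     (\<forall>x y. N (x + y) \<le> N x + N y)"

definition urtc_norm :: "(real \<times> real \<Rightarrow> real) \<Rightarrow> bool" where
  "urtc_norm N \<longleftrightarrow> is_norm2 N \<and>
     (\<forall>a b. N (a - b) = 1 \<longrightarrow> card {x. N (a - x) = 1 \<and> N (b - x) = 1} = 2)"

definition unit_sphere :: "(real \<times> real \<Rightarrow> real) \<Rightarrow> (real \<times> real) set" where
  "unit_sphere N = {x. N x = 1}"

definition pos_oriented :: "real \<times> real \<Rightarrow> real \<times> real \<Rightarrow> real \<times> real \<Rightarrow> bool" where
  "pos_oriented p q r \<longleftrightarrow>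
     (fst q - fst p) * (snd r - snd p) - (snd q - snd p) * (fst r - fst p) > 0"

definition urtc_f :: "(real \<times> real \<Rightarrow> real) \<Rightarrow> real \<times> real \<Rightarrow> real \<times> real" where
  "urtc_f N z = (THE w. w \<in> unit_sphere N \<and> N (z - w) = 1 \<and> pos_oriented 0 z w)"

end

theory Submission
  imports Defs
begin

definition det2 :: "real \<times> real \<Rightarrow> real \<times> real \<Rightarrow> real" where
  "det2 z w = fst z * snd w - snd z * fst w"

lemma pos_or0: "pos_oriented 0 z w \<longleftrightarrow> det2 z w > 0"
  by (simp add: pos_oriented_def det2_def)

lemma nrm_scale: "is_norm2 N \<Longrightarrow> N (c *\<^sub>R x) = \<bar>c\<bar> * N x"
  unfolding is_norm2_def by blast
lemma nrm_tri: "is_norm2 N \<Longrightarrow> N (x + y) \<le> N x + N y"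
  unfolding is_norm2_def by blast
lemma nrm_zero: "is_norm2 N \<Longrightarrow> N x = 0 \<longleftrightarrow> x = 0"
  unfolding is_norm2_def by blast
lemma nrm_minus: "is_norm2 N \<Longrightarrow> N (- x) = N x"
  using nrm_scale[of N "-1" x] by simp
lemma nrm_sym: "is_norm2 N \<Longrightarrow> N (x - y) = N (y - x)"
  using nrm_minus[of N "x - y"] by simp
lemma nrm_nonneg: "is_norm2 N \<Longrightarrow> N x \<ge> 0"
proof -
  assume n: "is_norm2 N"
  have "N 0 \<le> N x + N (-x)" using nrm_tri[OF n, of x "-x"] by simp
  then show ?thesis using nrm_zero[OF n, of 0] nrm_minus[OF n, of x] by simp
qed

lemma nrm_bound: 
  assumes n: "is_norm2 N"
  shows "N x \<le> (N (1,0) + N (0,1)) * norm x"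
proof -
  obtain a b where x: "x = (a,b)" by force
  have "x = a *\<^sub>R (1,0) + b *\<^sub>R (0,1)" using x by simp
  then have "N x \<le> N (a *\<^sub>R (1,0)) + N (b *\<^sub>R (0,1))" using nrm_tri[OF n] by metis
  also have "\<dots> = \<bar>a\<bar> * N (1,0) + \<bar>b\<bar> * N (0,1)" using nrm_scale[OF n, of a "(1,0)"] nrm_scale[OF n, of b "(0,1)"] by simp
  also have "\<dots> \<le> norm x * N (1,0) + norm x * N (0,1)"
  proof -
    have "\<bar>a\<bar> \<le> norm x" "\<bar>b\<bar> \<le> norm x" using x
      by (simp_all add: norm_Pair real_sqrt_sum_squares_ge1 real_sqrt_sum_squares_ge2)
    then show ?thesis using nrm_nonneg[OF n] by (simp add: add_mono mult_right_mono)
  qed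
  finally show ?thesis by (simp add: algebra_simps)
qed

lemma nrm_cont:
  assumes n: "is_norm2 N"
  shows "continuous_on UNIV N"
proof -
  define C where "C = N (1,0) + N (0,1)"
  have C0: "C \<ge> 0" using nrm_nonneg[OF n] C_def by (simp add: add_nonneg_nonneg)
  have "lipschitz_on C UNIV N"
    unfolding lipschitz_on_def
  proof (intro conjI C0 ballI)
    fix x y :: "real \<times> real"
    have "N x \<le> N y + N (x - y)" using nrm_tri[OF n, of y "x - y"] by simp
    moreover have "N y \<le> N x + N (x - y)" using nrm_tri[OF n, of x "y - x"] nrm_sym[OF n, of x y] by simp
    moreover have "N (x - y) \<le> C * dist x y" using nrm_bound[OF n, of "x - y"] C_def by (simp add: dist_norm)
    ultimately show "dist (N x) (N y) \<le> C * dist x y" by (simp add: dist_real_def abs_le_iff)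
  qed
  then show ?thesis using lipschitz_on_continuous_on by blast
qed

lemma nrm_lower:
  assumes n: "is_norm2 N"
  shows "\<exists>m>0. \<forall>x. m * norm x \<le> N x"
proof -
  have c1: "compact (sphere (0::real\<times>real) 1)" by (rule compact_sphere)
  have c2: "sphere (0::real\<times>real) 1 \<noteq> {}" proof -
    have "(1,0) \<in> sphere (0::real\<times>real) 1" by (simp add: norm_Pair)
    then show ?thesis by blast
  qed
  have c3: "continuous_on (sphere 0 1) N" by (rule continuous_on_subset[OF nrm_cont[OF n]]) simp
  obtain x0 where x0: "x0 \<in> sphere 0 1" "\<And>y. y \<in> sphere 0 1 \<Longrightarrow> N x0 \<le> N y"
    using continuous_attains_inf[OF c1 c2 c3] by blast
  have "x0 \<noteq> 0" using x0(1) by auto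
  then have "N x0 \<noteq> 0" using nrm_zero[OF n, of x0] by blast
  then have m0: "N x0 > 0" using nrm_nonneg[OF n, of x0] by linarith
  have "N x0 * norm x \<le> N x" for x
  proof (cases "x = 0")
    case True then show ?thesis using nrm_nonneg[OF n, of x] by simp
  next
    case False
    let ?u = "(1 / norm x) *\<^sub>R x"
    have "?u \<in> sphere 0 1" using False by simp
    then have "N x0 \<le> N ?u" using x0(2) by blast
    also have "\<dots> = N x / norm x" using nrm_scale[OF n, of "1 / norm x" x] by simp
    finally have "N x0 \<le> N x / norm x" .
    moreover have "norm x > 0" using False by simp
    ultimately show ?thesis by (simp add: pos_le_divide_eq)
  qed
  then show ?thesis using m0 by blast
qed

lemma sphere_compact:
  assumes n: "is_norm2 N"
  shows "compact (unit_sphere N)"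
proof -
  obtain m where m: "m > 0" "\<And>x. m * norm x \<le> N x" using nrm_lower[OF n] by blast
  have "bounded (unit_sphere N)"
    unfolding bounded_iff unit_sphere_def
  proof (intro exI ballI)
    fix x assume "x \<in> {x. N x = 1}"
    then have "m * norm x \<le> 1" using m(2)[of x] by simp
    then show "norm x \<le> 1/m" using m(1) by (simp add: field_simps)
  qed
  moreover have "closed (unit_sphere N)"
    unfolding unit_sphere_def using nrm_cont[OF n] by (intro closed_Collect_eq) auto
  ultimately show ?thesis by (simp add: compact_eq_bounded_closed)
qed

lemma aux1: "a \<noteq> 0 \<Longrightarrow> a*e - b*c = (0::real) \<Longrightarrow> (c,e) = (c/a) *\<^sub>R (a,b)"
  by (simp add: field_simps)
lemma aux2: "b \<noteq> 0 \<Longrightarrow> a = 0 \<Longrightarrow> a*e - b*c = (0::real) \<Longrightarrow> (c,e) = (e/b) *\<^sub>R (a,b)"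
  by simp

lemma det_nz:
  assumes n: "is_norm2 N" and z: "N z = 1" and x: "N x = 1" "N (z - x) = 1"
  shows "det2 z x \<noteq> 0"
proof
  assume d: "det2 z x = 0"
  have "z \<noteq> 0" using z nrm_zero[OF n, of z] by auto
  obtain a b where ze: "z = (a,b)" by (cases z)
  obtain c e where xe: "x = (c,e)" by (cases x)
  have d': "a*e - b*c = 0" using d ze xe by (simp add: det2_def)
  have "\<exists>t. x = t *\<^sub>R z"
  proof (cases "a = 0")
    case False
    show ?thesis using aux1[OF False d'] ze xe by blast
  next
    case True
    then have "b \<noteq> 0" using \<open>z \<noteq> 0\<close> ze by (auto simp: zero_prod_def)
    show ?thesis using aux2[OF \<open>b \<noteq> 0\<close> True d'] ze xe by blast
  qed
  then obtain t where t: "x = t *\<^sub>R z" by blast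
  have "N x = \<bar>t\<bar> * N z" using t nrm_scale[OF n, of t z] by simp
  then have t1: "\<bar>t\<bar> = 1" using x(1) z by simp
  have "z - x = (1 - t) *\<^sub>R z" using t by (simp add: algebra_simps)
  then have "N (z - x) = \<bar>1 - t\<bar> * N z" using nrm_scale[OF n, of "1 - t" z] by simp
  then have "\<bar>1 - t\<bar> = 1" using x(2) z by simp
  with t1 show False by linarith
qed

lemma det_swap: "det2 z (z - x) = - det2 z x"
  by (simp add: det2_def algebra_simps)

lemma the_set:
  assumes u: "urtc_norm N" and z: "N z = 1" and x: "N x = 1" "N (z - x) = 1"
  shows "{y. N (z - y) = 1 \<and> N (0 - y) = 1} = {x, z - x}"
proof -
  have n: "is_norm2 N" using u urtc_norm_def by blast
  have "N (z - 0) = 1" using z by simp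
  then have c: "card {y. N (z - y) = 1 \<and> N (0 - y) = 1} = 2"
    using u unfolding urtc_norm_def by blast
  have "det2 z x \<noteq> 0" using det_nz[OF n z x] .
  then have ne: "x \<noteq> z - x" using det_swap[of z x] by auto
  have m1: "N (0 - x) = 1" using x(1) nrm_minus[OF n, of x] by simp
  have m2: "N (z - (z - x)) = 1" using x(1) by simp
  have m3: "N (0 - (z - x)) = 1" using x(2) nrm_minus[OF n, of "z - x"] by simp
  have sub: "{x, z - x} \<subseteq> {y. N (z - y) = 1 \<and> N (0 - y) = 1}"
    using x(2) m1 m2 m3 by blast
  have fin: "finite {y. N (z - y) = 1 \<and> N (0 - y) = 1}"
    using c by (metis card.infinite zero_neq_numeral)
  have "card {x, z - x} = 2" using ne by simp
  then show ?thesis using card_subset_eq[OF fin sub] c by simp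
qed

lemma f_prop:
  assumes u: "urtc_norm N" and z: "N z = 1"
  shows "N (urtc_f N z) = 1 \<and> N (z - urtc_f N z) = 1 \<and> det2 z (urtc_f N z) > 0"
proof -
  have n: "is_norm2 N" using u urtc_norm_def by blast
  have "N (z - 0) = 1" using z by simp
  then have c: "card {y. N (z - y) = 1 \<and> N (0 - y) = 1} = 2"
    using u unfolding urtc_norm_def by blast
  then have "{y. N (z - y) = 1 \<and> N (0 - y) = 1} \<noteq> {}" by (metis card.empty zero_neq_numeral)
  then obtain x where x0: "N (z - x) = 1" "N (0 - x) = 1" by blast
  have x1: "N x = 1" using x0(2) nrm_minus[OF n, of x] by simp
  have x': "N (z - x) = 1" "N (z - (z - x)) = 1" "N (z - x) = 1" using x0(1) x1 by simp_all
  have dn: "det2 z x \<noteq> 0" using det_nz[OF n z x1 x0(1)] .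
  obtain w where w: "N w = 1" "N (z - w) = 1" "det2 z w > 0"
  proof (cases "det2 z x > 0")
    case True then show ?thesis using that x1 x0(1) by blast
  next
    case False
    then have "det2 z (z - x) > 0" using dn det_swap[of z x] by linarith
    then show ?thesis using that[of "z - x"] x' by blast
  qed
  have uniq: "y = w" if y: "N y = 1" "N (z - y) = 1" "det2 z y > 0" for y
  proof -
    have "N (0 - y) = 1" using y(1) nrm_minus[OF n, of y] by simp
    then have "y \<in> {y. N (z - y) = 1 \<and> N (0 - y) = 1}" using y(2) by blast
    then have "y = w \<or> y = z - w" using the_set[OF u z w(1,2)] by blast
    moreover have "y \<noteq> z - w" using y(3) w(3) det_swap[of z w] by force
    ultimately show ?thesis by blast
  qed
  have P: "w \<in> unit_sphere N \<and> N (z - w) = 1 \<and> pos_oriented 0 z w"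
    using w unfolding unit_sphere_def pos_or0 by blast
  have Q: "\<And>y. y \<in> unit_sphere N \<and> N (z - y) = 1 \<and> pos_oriented 0 z y \<Longrightarrow> y = w"
    using uniq unfolding unit_sphere_def pos_or0 by blast
  have "urtc_f N z = w"
    unfolding urtc_f_def by (rule the_equality[where P="\<lambda>y. y \<in> unit_sphere N \<and> N (z - y) = 1 \<and> pos_oriented 0 z y", OF P Q])
  then show ?thesis using w by simp
qed

theorem lemma3:
  fixes N :: "real \<times> real \<Rightarrow> real"
  assumes "urtc_norm N"
  shows "continuous_on (unit_sphere N) (urtc_f N)"
proof (rule continuous_from_closed_graph[of "unit_sphere N"])
  have n: "is_norm2 N" using assms urtc_norm_def by blast
  show "compact (unit_sphere N)" using sphere_compact[OF n] .
  show "urtc_f N \<in> unit_sphere N \<rightarrow> unit_sphere N"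
  proof
    fix z assume "z \<in> unit_sphere N"
    then have "N z = 1" by (simp add: unit_sphere_def)
    then have "N (urtc_f N z) = 1" using f_prop[OF assms] by blast
    then show "urtc_f N z \<in> unit_sphere N" by (simp add: unit_sphere_def)
  qed
  define G where "G = {p. N (fst p) = 1} \<inter> {p. N (snd p) = 1} \<inter> {p. N (fst p - snd p) = 1} \<inter> {p. det2 (fst p) (snd p) \<ge> 0}"
  have eq: "(\<lambda>x. (x, urtc_f N x)) ` unit_sphere N = G"
  proof (intro set_eqI iffI)
    fix p assume "p \<in> (\<lambda>x. (x, urtc_f N x)) ` unit_sphere N"
    then obtain z where z: "z \<in> unit_sphere N" and pz: "p = (z, urtc_f N z)" by blast
    have z1: "N z = 1" using z by (simp add: unit_sphere_def)
    have F: "N (urtc_f N z) = 1 \<and> N (z - urtc_f N z) = 1 \<and> det2 z (urtc_f N z) > 0"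
      using f_prop[OF assms z1] .
    show "p \<in> G" unfolding G_def pz
      apply (simp only: Int_iff mem_Collect_eq fst_conv snd_conv)
      using F z1 less_imp_le by blast
  next
    fix p assume p: "p \<in> G"
    obtain z w where pz: "p = (z, w)" by (cases p)
    have "(z, w) \<in> G" using p pz by simp
    then have h0: "N z = 1 \<and> N w = 1 \<and> N (z - w) = 1 \<and> det2 z w \<ge> 0"
      unfolding G_def by (simp only: Int_iff mem_Collect_eq fst_conv snd_conv)
    then have h: "N z = 1" "N w = 1" "N (z - w) = 1" "det2 z w \<ge> 0" by blast+
    have d: "det2 z w > 0" using det_nz[OF n h(1) h(2) h(3)] h(4) by linarith
    have fp: "N (urtc_f N z) = 1" "N (z - urtc_f N z) = 1" "det2 z (urtc_f N z) > 0"
      using f_prop[OF assms h(1)] by blast+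
    have S: "{y. N (z - y) = 1 \<and> N (0 - y) = 1} = {w, z - w}" using the_set[OF assms h(1) h(2) h(3)] .
    have "N (0 - urtc_f N z) = 1" using fp(1) nrm_minus[OF n, of "urtc_f N z"] by simp
    then have "urtc_f N z \<in> {y. N (z - y) = 1 \<and> N (0 - y) = 1}" using fp(2) by blast
    then have "urtc_f N z = w \<or> urtc_f N z = z - w" using S by blast
    moreover have "urtc_f N z \<noteq> z - w"
    proof
      assume "urtc_f N z = z - w"
      then have "det2 z (urtc_f N z) = - det2 z w" using det_swap[of z w] by simp
      then show False using fp(3) d by linarith
    qed
    ultimately have fw: "urtc_f N z = w" by blast
    have "z \<in> unit_sphere N" using h(1) by (simp add: unit_sphere_def)
    moreover have "p = (\<lambda>x. (x, urtc_f N x)) z" using pz fw by simp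
    ultimately show "p \<in> (\<lambda>x. (x, urtc_f N x)) ` unit_sphere N" by (rule rev_image_eqI)
  qed
  have cN: "continuous_on UNIV N" using nrm_cont[OF n] .
  have c1: "continuous_on UNIV (\<lambda>p::(real\<times>real)\<times>(real\<times>real). N (fst p))"
    by (rule continuous_on_compose2[OF cN]) (auto intro: continuous_intros)
  have c2: "continuous_on UNIV (\<lambda>p::(real\<times>real)\<times>(real\<times>real). N (snd p))"
    by (rule continuous_on_compose2[OF cN]) (auto intro: continuous_intros)
  have cd: "continuous_on UNIV (\<lambda>p::(real\<times>real)\<times>(real\<times>real). fst p - snd p)"
    by (intro continuous_on_diff continuous_on_fst continuous_on_snd continuous_on_id)
  have c3: "continuous_on UNIV (\<lambda>p::(real\<times>real)\<times>(real\<times>real). N (fst p - snd p))"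
    by (rule continuous_on_compose2[OF cN cd]) simp
  have c4: "continuous_on UNIV (\<lambda>p::(real\<times>real)\<times>(real\<times>real). det2 (fst p) (snd p))"
    unfolding det2_def by (intro continuous_intros)
  have "closed G" unfolding G_def
    by (intro closed_Int closed_Collect_eq closed_Collect_le c1 c2 c3 c4 continuous_on_const)
  then show "closed ((\<lambda>x. (x, urtc_f N x)) ` unit_sphere N)" using eq by simp
qed

end
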